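(* The following two conditions are equivalent: (1) for each relevant pair $\langle m_1,m_2\rangle$ of a state $p\in Q^2$, $\nu(p)$ is a most general equalizer (mge) for $\langle m_1,m_2\rangle$; (2) for all states $p,q\in Q^2$ such that $\rho(p)=\langle m_1,m_2\rangle$ and $\rho(q)=\langle n_1,n_2\rangle$ are defined, and for each transition $\langle p,\langle u_1,u_2\rangle,q\rangle\in\Delta_2$, $\eta(m_1u_1,m_2u_2)$ is a mge of $\rho(q)$.
   Context: Let $\mathcal{M}=\langle M,\circ,e\rangle$ be a monoid. A tuple $\langle m_1,\dots,m_n\rangle\in M^n$ is equalizable if there is $\langle x_1,\dots,x_n\rangle\in M^n$ (an equalizer) with $m_1x_1=\dots=m_nx_n$; an equalizer $\langle x_1,\dots,x_n\rangle$ is a most general equalizer (mge) if every equalizer has the form $\langle x_1x,\dots,x_nx\rangle$ for some $x\in M$. $\mathcal{M}$ is an mge monoid if it has right cancellation ($ac=bc\Rightarrow a=b$) and every equalizable pair has an mge. Let $\eta:M^2\to M^2$ be a function that returns an mge $\eta(m,m')$ for each equalizable pair $\langle m,m'\rangle$. Let $\mathcal{T}=\langle \Sigma^*\times\mathcal{M},Q,I,F,\Delta\rangle$ be a trimmed (every state accessible and co-accessible) monoidal finite-state transducer with output in the mge monoid $\mathcal{M}$, where $\Delta\subseteq Q\times((\Sigma\cup\{\varepsilon\})\times M)\times Q$ and $\Delta^*$ is its generalized transition relation. Let $\mathcal{A}^2=\langle \mathcal{M}\times\mathcal{M},Q\times Q,I\times I,F\times F,\Delta_2\rangle$ be a squared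 output automaton for $\mathcal{T}$, i.e. $\Delta_2$ is finite and $\langle\langle p_1,p_2\rangle,\langle m,n\rangle,\langle q_1,q_2\rangle\rangle\in\Delta_2^*$ iff there is $u\in\Sigma^*$ with $\langle p_1,\langle u,m\rangle,q_1\rangle\in\Delta^*$ and $\langle p_2,\langle u,n\rangle,q_2\rangle\in\Delta^*$. For a state $\langle q_1,q_2\rangle$ lying on a successful path of $\mathcal{A}^2$, a pair $\langle m_1,m_2\rangle$ is a relevant pair for $\langle q_1,q_2\rangle$ if $\langle\langle i_1,i_2\rangle,\langle m_1,m_2\rangle,\langle q_1,q_2\rangle\rangle\in\Delta_2^*$ for some $\langle i_1,i_2\rangle\in I\times I$. Let $\langle\rho,\nu\rangle$ be a valuation of $\mathcal{A}^2$: $\rho,\nu:Q^2\to M^2$ are partial functions where $\rho(q)$ is some chosen relevant pair for $q$ if one exists (undefined otherwise), with $\rho(q)=\langle e,e\rangle$ for $q\in I^2$ having a relevant pair; and $\nu(q)=\langle e,e\rangle$ if $\rho(q)$ is defined and of the form $\langle m,m\rangle$, $\nu(q)=\eta(\rho(q))$ if $\rho(q)$ is defined and equalizable, and $\nu(q)$ undefined otherwise. *)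

theory Defs
  imports Main
begin

definition equalizer :: "'m::monoid_mult \<times> 'm \<Rightarrow> 'm \<times> 'm \<Rightarrow> bool" where
  "equalizer x m \<longleftrightarrow> fst m * fst x = snd m * snd x"

definition equalizable :: "'m::monoid_mult \<times> 'm \<Rightarrow> bool" where
  "equalizable m \<longleftrightarrow> (\<exists>x. equalizer x m)"

definition is_mge :: "'m::monoid_mult \<times> 'm \<Rightarrow> 'm \<times> 'm \<Rightarrow> bool" where
  "is_mge x m \<longleftrightarrow> equalizer x m \<and>
     (\<forall>y. equalizer y m \<longrightarrow> (\<exists>z. y = (fst x * z, snd x * z)))"

definition mge_monoid :: "'m::monoid_mult itself \<Rightarrow> bool" where
  "mge_monoid _ \<longleftrightarrow> (\<forall>a b c::'m. a * c = b * c \<longrightarrow> a = b) \<and>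
     (\<forall>m::'m \<times> 'm. equalizable m \<longrightarrow> (\<exists>x. is_mge x m))"

definition mge_fun :: "('m::monoid_mult \<times> 'm \<Rightarrow> ('m \<times> 'm) option) \<Rightarrow> bool" where
  "mge_fun \<eta> \<longleftrightarrow> (\<forall>m. (\<eta> m \<noteq> None \<longleftrightarrow> equalizable m) \<and>
                        (\<forall>x. \<eta> m = Some x \<longrightarrow> is_mge x m))"

definition opt_word :: "'a option \<Rightarrow> 'a list" where
  "opt_word a = (case a of None \<Rightarrow> [] | Some x \<Rightarrow> [x])"

inductive tstar :: "('q \<times> ('a option \<times> 'm::monoid_mult) \<times> 'q) set \<Rightarrow> 'q \<Rightarrow> 'a list \<times> 'm \<Rightarrow> 'q \<Rightarrow> bool"
  for \<Delta> where
  tstar_refl: "tstar \<Delta> q ([], 1) q"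
| tstar_step: "(p, (a, m), q) \<in> \<Delta> \<Longrightarrow> tstar \<Delta> q (w, n) r \<Longrightarrow> tstar \<Delta> p (opt_word a @ w, m * n) r"

definition trimmed_transducer ::
  "'q set \<Rightarrow> 'q set \<Rightarrow> 'q set \<Rightarrow> ('q \<times> ('a option \<times> 'm::monoid_mult) \<times> 'q) set \<Rightarrow> bool" where
  "trimmed_transducer Q I F \<Delta> \<longleftrightarrow> finite Q \<and> I \<subseteq> Q \<and> F \<subseteq> Q \<and> finite \<Delta> \<and>
     \<Delta> \<subseteq> Q \<times> UNIV \<times> Q \<and>
     (\<forall>q\<in>Q. (\<exists>i\<in>I. \<exists>l. tstar \<Delta> i l q) \<and> (\<exists>f\<in>F. \<exists>l. tstar \<Delta> q l f))"

inductive sstar :: "(('q \<times> 'q) \<times> ('m::monoid_mult \<times> 'm) \<times> ('q \<times> 'q)) set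
                    \<Rightarrow> 'q \<times> 'q \<Rightarrow> 'm \<times> 'm \<Rightarrow> 'q \<times> 'q \<Rightarrow> bool"
  for \<Delta>2 where
  sstar_refl: "sstar \<Delta>2 p (1, 1) p"
| sstar_step: "(p, (m1, m2), q) \<in> \<Delta>2 \<Longrightarrow> sstar \<Delta>2 q (n1, n2) r \<Longrightarrow> sstar \<Delta>2 p (m1 * n1, m2 * n2) r"

definition squared_output_automaton ::
  "'q set \<Rightarrow> ('q \<times> ('a option \<times> 'm::monoid_mult) \<times> 'q) set
   \<Rightarrow> (('q \<times> 'q) \<times> ('m \<times> 'm) \<times> ('q \<times> 'q)) set \<Rightarrow> bool" where
  "squared_output_automaton Q \<Delta> \<Delta>2 \<longleftrightarrow> finite \<Delta>2 \<and>
     \<Delta>2 \<subseteq> (Q \<times> Q) \<times> UNIV \<times> (Q \<times> Q) \<and>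
     (\<forall>p1\<in>Q. \<forall>p2\<in>Q. \<forall>q1\<in>Q. \<forall>q2\<in>Q. \<forall>m n.
        sstar \<Delta>2 (p1, p2) (m, n) (q1, q2) \<longleftrightarrow>
        (\<exists>u. tstar \<Delta> p1 (u, m) q1 \<and> tstar \<Delta> p2 (u, n) q2))"

definition on_successful_path ::
  "('q \<times> 'q) set \<Rightarrow> ('q \<times> 'q) set \<Rightarrow> (('q \<times> 'q) \<times> ('m::monoid_mult \<times> 'm) \<times> ('q \<times> 'q)) set
   \<Rightarrow> 'q \<times> 'q \<Rightarrow> bool" where
  "on_successful_path I2 F2 \<Delta>2 q \<longleftrightarrow>
     (\<exists>i\<in>I2. \<exists>f\<in>F2. \<exists>a b. sstar \<Delta>2 i a q \<and> sstar \<Delta>2 q b f)"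

definition relevant_pair ::
  "('q \<times> 'q) set \<Rightarrow> ('q \<times> 'q) set \<Rightarrow> (('q \<times> 'q) \<times> ('m::monoid_mult \<times> 'm) \<times> ('q \<times> 'q)) set
   \<Rightarrow> 'q \<times> 'q \<Rightarrow> 'm \<times> 'm \<Rightarrow> bool" where
  "relevant_pair I2 F2 \<Delta>2 q r \<longleftrightarrow>
     on_successful_path I2 F2 \<Delta>2 q \<and> (\<exists>i\<in>I2. sstar \<Delta>2 i r q)"

definition valuation_rho ::
  "'q set \<Rightarrow> ('q \<times> 'q) set \<Rightarrow> ('q \<times> 'q) set \<Rightarrow> (('q \<times> 'q) \<times> ('m::monoid_mult \<times> 'm) \<times> ('q \<times> 'q)) set
   \<Rightarrow> ('q \<times> 'q \<Rightarrow> ('m \<times> 'm) option) \<Rightarrow> bool" where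
  "valuation_rho Q I2 F2 \<Delta>2 \<rho> \<longleftrightarrow>
     (\<forall>q\<in>Q \<times> Q. (\<rho> q = None \<longleftrightarrow> \<not> (\<exists>r. relevant_pair I2 F2 \<Delta>2 q r)) \<and>
                (\<forall>r. \<rho> q = Some r \<longrightarrow> relevant_pair I2 F2 \<Delta>2 q r) \<and>
                (q \<in> I2 \<and> (\<exists>r. relevant_pair I2 F2 \<Delta>2 q r) \<longrightarrow> \<rho> q = Some (1, 1)))"

definition valuation_nu ::
  "('q \<times> 'q \<Rightarrow> ('m::monoid_mult \<times> 'm) option) \<Rightarrow> ('m \<times> 'm \<Rightarrow> ('m \<times> 'm) option)
   \<Rightarrow> 'q \<times> 'q \<Rightarrow> ('m \<times> 'm) option" where
  "valuation_nu \<rho> \<eta> q = (case \<rho> q of None \<Rightarrow> None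
      | Some (m, m') \<Rightarrow> if m = m' then Some (1, 1) else \<eta> (m, m'))"

end

theory Submission
  imports Defs
begin

definition EQ :: "'m::monoid_mult \<times> 'm \<Rightarrow> ('m \<times> 'm) set" where
  "EQ r = {y. equalizer y r}"

lemma is_mge_EQ: "is_mge x r \<longleftrightarrow> EQ r = range (\<lambda>z. (fst x * z, snd x * z))"
proof
  assume a: "is_mge x r"
  show "EQ r = range (\<lambda>z. (fst x * z, snd x * z))"
  proof
    show "EQ r \<subseteq> range (\<lambda>z. (fst x * z, snd x * z))"
      using a unfolding EQ_def is_mge_def by (auto simp: image_iff)
    show "range (\<lambda>z. (fst x * z, snd x * z)) \<subseteq> EQ r"
      using a by (auto simp: EQ_def is_mge_def equalizer_def mult.assoc[symmetric])
  qed
next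
  assume a: "EQ r = range (\<lambda>z. (fst x * z, snd x * z))"
  have "(fst x * 1, snd x * 1) \<in> EQ r" using a by blast
  hence "equalizer x r" by (simp add: EQ_def)
  moreover have "\<forall>y. equalizer y r \<longrightarrow> (\<exists>z. y = (fst x * z, snd x * z))"
  proof (intro allI impI)
    fix y assume "equalizer y r"
    hence "y \<in> EQ r" by (simp add: EQ_def)
    then show "\<exists>z. y = (fst x * z, snd x * z)" using a by (auto simp: image_iff)
  qed
  ultimately show "is_mge x r" by (simp add: is_mge_def)
qed

lemma EQ_mult: "EQ r = EQ m \<Longrightarrow> EQ (fst r * u1, snd r * u2) = EQ (fst m * u1, snd m * u2)"
proof -
  assume a: "EQ r = EQ m"
  have "\<And>y. y \<in> EQ (fst r * u1, snd r * u2) \<longleftrightarrow> (u1 * fst y, u2 * snd y) \<in> EQ r"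
    by (simp add: EQ_def equalizer_def mult.assoc)
  moreover have "\<And>y. y \<in> EQ (fst m * u1, snd m * u2) \<longleftrightarrow> (u1 * fst y, u2 * snd y) \<in> EQ m"
    by (simp add: EQ_def equalizer_def mult.assoc)
  ultimately show ?thesis using a by blast
qed

lemma left_cancel:
  assumes "mge_monoid TYPE('m::monoid_mult)" and "(m::'m) * a = m * b"
  shows "a = b"
proof -
  have rc: "\<And>a b c::'m. a * c = b * c \<Longrightarrow> a = b" using assms(1) unfolding mge_monoid_def by blast
  have "equalizable (m, m)" by (auto simp: equalizable_def equalizer_def intro: exI[of _ "(1,1)"])
  then obtain x where x: "is_mge x (m, m)" using assms(1) unfolding mge_monoid_def by blast
  have "equalizer (1,1) (m,m)" by (simp add: equalizer_def)
  then have "\<exists>z. (1::'m,1::'m) = (fst x * z, snd x * z)" using x unfolding is_mge_def by blast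
  then obtain z where "(1::'m,1::'m) = (fst x * z, snd x * z)" by blast
  hence "fst x * z = snd x * z" by simp
  hence e: "fst x = snd x" by (rule rc)
  have "equalizer (a,b) (m,m)" using assms(2) by (simp add: equalizer_def)
  then have "\<exists>w. (a,b) = (fst x * w, snd x * w)" using x unfolding is_mge_def by blast
  then obtain w where "(a,b) = (fst x * w, snd x * w)" by blast
  thus ?thesis using e by simp
qed

lemma sstar_snoc:
  "sstar D i r p \<Longrightarrow> (p, (u1, u2), q) \<in> D \<Longrightarrow> sstar D i (fst r * u1, snd r * u2) q"
proof (induction rule: sstar.induct)
  case (sstar_refl p)
  then show ?case using sstar.sstar_step[of p u1 u2 q D 1 1 q] sstar.sstar_refl[of D q] by simp
next
  case (sstar_step p m1 m2 q n1 n2 r)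
  then show ?case using sstar.sstar_step[of p m1 m2 q D "n1 * u1" "n2 * u2"]
    by (simp add: mult.assoc)
qed

inductive sstar' :: "(('q \<times> 'q) \<times> ('m::monoid_mult \<times> 'm) \<times> ('q \<times> 'q)) set
                    \<Rightarrow> 'q \<times> 'q \<Rightarrow> 'm \<times> 'm \<Rightarrow> 'q \<times> 'q \<Rightarrow> bool" for D where
  r': "sstar' D p (1, 1) p"
| s': "sstar' D p r q \<Longrightarrow> (q, (u1, u2), t) \<in> D \<Longrightarrow> sstar' D p (fst r * u1, snd r * u2) t"

lemma sstar'_cons:
  "sstar' D q n r \<Longrightarrow> (p, (m1, m2), q) \<in> D \<Longrightarrow> sstar' D p (m1 * fst n, m2 * snd n) r"
proof (induction rule: sstar'.induct)
  case (r' p)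
  from sstar'.s'[OF sstar'.r' r'] show ?case by simp
next
  case (s' p r q u1 u2 t)
  then show ?case using sstar'.s'[of D _ "(m1 * fst r, m2 * snd r)" q u1 u2 t]
    by (simp add: mult.assoc)
qed

lemma sstar_to': "sstar D p n r \<Longrightarrow> sstar' D p n r"
  by (induction rule: sstar.induct) (auto intro: sstar'.r' dest: sstar'_cons)

lemma sstar_from': "sstar' D p n r \<Longrightarrow> sstar D p n r"
  by (induction rule: sstar'.induct) (auto intro: sstar.sstar_refl dest: sstar_snoc)


theorem proposition4:
  fixes Q :: "'q set" and I F :: "'q set"
    and \<Delta> :: "('q \<times> ('a option \<times> 'm::monoid_mult) \<times> 'q) set"
    and \<Delta>2 :: "(('q \<times> 'q) \<times> ('m \<times> 'm) \<times> ('q \<times> 'q)) set"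
    and \<eta> :: "'m \<times> 'm \<Rightarrow> ('m \<times> 'm) option"
    and \<rho> :: "'q \<times> 'q \<Rightarrow> ('m \<times> 'm) option"
  assumes "mge_monoid TYPE('m)"
    and "mge_fun \<eta>"
    and "trimmed_transducer Q I F \<Delta>"
    and "squared_output_automaton Q \<Delta> \<Delta>2"
    and "valuation_rho Q (I \<times> I) (F \<times> F) \<Delta>2 \<rho>"
  shows "(\<forall>p\<in>Q \<times> Q. \<forall>r. relevant_pair (I \<times> I) (F \<times> F) \<Delta>2 p r \<longrightarrow>
            (\<exists>x. valuation_nu \<rho> \<eta> p = Some x \<and> is_mge x r))
     \<longleftrightarrow>
         (\<forall>p\<in>Q \<times> Q. \<forall>q\<in>Q \<times> Q. \<forall>m1 m2 n1 n2 u1 u2.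
            \<rho> p = Some (m1, m2) \<longrightarrow> \<rho> q = Some (n1, n2) \<longrightarrow> (p, (u1, u2), q) \<in> \<Delta>2 \<longrightarrow>
            (\<exists>x. \<eta> (m1 * u1, m2 * u2) = Some x \<and> is_mge x (n1, n2)))"
proof -
  have IQ: "I \<subseteq> Q" using assms(3) by (simp add: trimmed_transducer_def)
  have D2: "\<Delta>2 \<subseteq> (Q \<times> Q) \<times> UNIV \<times> (Q \<times> Q)" using assms(4) by (simp add: squared_output_automaton_def)
  have rhoN: "\<And>q. q \<in> Q \<times> Q \<Longrightarrow> \<rho> q = None \<longleftrightarrow> \<not> (\<exists>r. relevant_pair (I \<times> I) (F \<times> F) \<Delta>2 q r)"
    using assms(5) unfolding valuation_rho_def by blast
  have rhoS: "\<And>q r. q \<in> Q \<times> Q \<Longrightarrow> \<rho> q = Some r \<Longrightarrow> relevant_pair (I \<times> I) (F \<times> F) \<Delta>2 q r"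
    using assms(5) unfolding valuation_rho_def by blast
  have rhoI: "\<And>q. q \<in> Q \<times> Q \<Longrightarrow> q \<in> I \<times> I \<Longrightarrow> (\<exists>r. relevant_pair (I \<times> I) (F \<times> F) \<Delta>2 q r) \<Longrightarrow> \<rho> q = Some (1, 1)"
    using assms(5) unfolding valuation_rho_def by blast
  have etaS: "\<And>m x. \<eta> m = Some x \<Longrightarrow> is_mge x m" using assms(2) unfolding mge_fun_def by blast
  have etaD: "\<And>m. equalizable m \<Longrightarrow> \<eta> m \<noteq> None" using assms(2) unfolding mge_fun_def by blast
  show ?thesis
  proof
    assume H1: "\<forall>p\<in>Q \<times> Q. \<forall>r. relevant_pair (I \<times> I) (F \<times> F) \<Delta>2 p r \<longrightarrow>
            (\<exists>x. valuation_nu \<rho> \<eta> p = Some x \<and> is_mge x r)"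
    show "\<forall>p\<in>Q \<times> Q. \<forall>q\<in>Q \<times> Q. \<forall>m1 m2 n1 n2 u1 u2.
            \<rho> p = Some (m1, m2) \<longrightarrow> \<rho> q = Some (n1, n2) \<longrightarrow> (p, (u1, u2), q) \<in> \<Delta>2 \<longrightarrow>
            (\<exists>x. \<eta> (m1 * u1, m2 * u2) = Some x \<and> is_mge x (n1, n2))"
    proof (intro ballI allI impI)
      fix p q m1 m2 n1 n2 u1 u2
      assume p: "p \<in> Q \<times> Q" and q: "q \<in> Q \<times> Q" and rp: "\<rho> p = Some (m1, m2)"
        and rq: "\<rho> q = Some (n1, n2)" and e: "(p, (u1, u2), q) \<in> \<Delta>2"
      have relp: "relevant_pair (I \<times> I) (F \<times> F) \<Delta>2 p (m1, m2)" using rhoS[OF p rp] .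
      have relq: "relevant_pair (I \<times> I) (F \<times> F) \<Delta>2 q (n1, n2)" using rhoS[OF q rq] .
      obtain i where i: "i \<in> I \<times> I" "sstar \<Delta>2 i (m1, m2) p" using relp by (auto simp: relevant_pair_def)
      have "sstar \<Delta>2 i (m1 * u1, m2 * u2) q" using sstar_snoc[OF i(2) e] by simp
      hence relq2: "relevant_pair (I \<times> I) (F \<times> F) \<Delta>2 q (m1 * u1, m2 * u2)"
        using relq i(1) by (auto simp: relevant_pair_def)
      obtain x where x: "valuation_nu \<rho> \<eta> q = Some x" "is_mge x (n1, n2)" using H1 q relq by blast
      obtain x2 where x2: "valuation_nu \<rho> \<eta> q = Some x2" "is_mge x2 (m1 * u1, m2 * u2)" using H1 q relq2 by blast
      have EQn: "EQ (n1, n2) = EQ (m1 * u1, m2 * u2)" using x x2 by (simp add: is_mge_EQ)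
      have "equalizable (m1 * u1, m2 * u2)" using x2(2) unfolding is_mge_def equalizable_def by blast
      then obtain x' where x': "\<eta> (m1 * u1, m2 * u2) = Some x'" using etaD by blast
      have "is_mge x' (n1, n2)" using etaS[OF x'] EQn by (simp add: is_mge_EQ)
      thus "\<exists>x. \<eta> (m1 * u1, m2 * u2) = Some x \<and> is_mge x (n1, n2)" using x' by blast
    qed
  next
    assume H2: "\<forall>p\<in>Q \<times> Q. \<forall>q\<in>Q \<times> Q. \<forall>m1 m2 n1 n2 u1 u2.
            \<rho> p = Some (m1, m2) \<longrightarrow> \<rho> q = Some (n1, n2) \<longrightarrow> (p, (u1, u2), q) \<in> \<Delta>2 \<longrightarrow>
            (\<exists>x. \<eta> (m1 * u1, m2 * u2) = Some x \<and> is_mge x (n1, n2))"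
    have inv: "sstar' \<Delta>2 i r s \<Longrightarrow> i \<in> I \<times> I \<Longrightarrow> on_successful_path (I \<times> I) (F \<times> F) \<Delta>2 s \<Longrightarrow>
       (\<exists>m. \<rho> s = Some m \<and> EQ r = EQ m \<and> EQ r \<noteq> {})" for i r s
    proof (induction rule: sstar'.induct)
      case (r' p)
      have pQ: "p \<in> Q \<times> Q" using r'.prems(1) IQ by auto
      have "relevant_pair (I \<times> I) (F \<times> F) \<Delta>2 p (1, 1)"
        using r'.prems by (auto simp: relevant_pair_def intro: sstar.sstar_refl)
      hence "\<rho> p = Some (1, 1)" using rhoI[OF pQ r'.prems(1)] by blast
      moreover have "(1, 1) \<in> EQ (1::'m, 1::'m)" by (simp add: EQ_def equalizer_def)
      ultimately show ?case by blast
    next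
      case (s' p r q u1 u2 t)
      have qQ: "q \<in> Q \<times> Q" and tQ: "t \<in> Q \<times> Q" using s'.hyps(2) D2 by auto
      obtain i' f a b where f: "i' \<in> I \<times> I" "f \<in> F \<times> F" "sstar \<Delta>2 i' a t" "sstar \<Delta>2 t b f"
        using s'.prems(2) by (auto simp: on_successful_path_def)
      have sq: "sstar \<Delta>2 p r q" using sstar_from'[OF s'.hyps(1)] .
      have "sstar \<Delta>2 q (u1 * fst b, u2 * snd b) f"
        using sstar.sstar_step[OF s'.hyps(2), of "fst b" "snd b" f] f(4) by simp
      hence "on_successful_path (I \<times> I) (F \<times> F) \<Delta>2 q"
        using sq s'.prems(1) f(2) unfolding on_successful_path_def by blast
      then obtain m where m: "\<rho> q = Some m" "EQ r = EQ m" using s'.IH s'.prems(1) by blast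
      have "sstar \<Delta>2 p (fst r * u1, snd r * u2) t" using sstar_snoc[OF sq s'.hyps(2)] .
      hence "relevant_pair (I \<times> I) (F \<times> F) \<Delta>2 t (fst r * u1, snd r * u2)"
        using s'.prems by (auto simp: relevant_pair_def)
      then obtain n where n: "\<rho> t = Some n" using rhoN[OF tQ] by (cases "\<rho> t") auto
      obtain x where x: "\<eta> (fst m * u1, snd m * u2) = Some x" "is_mge x n"
        using H2 qQ tQ m(1) n s'.hyps(2) by (cases m, cases n) fastforce
      have "EQ n = EQ (fst m * u1, snd m * u2)" using x etaS[OF x(1)] by (simp add: is_mge_EQ)
      also have "\<dots> = EQ (fst r * u1, snd r * u2)" using EQ_mult[OF m(2)] by simp
      finally have e: "EQ (fst r * u1, snd r * u2) = EQ n" by simp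
      have en: "EQ n = range (\<lambda>z. (fst x * z, snd x * z))" using x(2) by (simp only: is_mge_EQ)
      have "(fst x * 1, snd x * 1) \<in> EQ n" unfolding en by (rule rangeI)
      thus ?case using e n by auto
    qed
    show "\<forall>p\<in>Q \<times> Q. \<forall>r. relevant_pair (I \<times> I) (F \<times> F) \<Delta>2 p r \<longrightarrow>
            (\<exists>x. valuation_nu \<rho> \<eta> p = Some x \<and> is_mge x r)"
    proof (intro ballI allI impI)
      fix p r assume p: "p \<in> Q \<times> Q" and rel: "relevant_pair (I \<times> I) (F \<times> F) \<Delta>2 p r"
      obtain i where i: "i \<in> I \<times> I" "sstar \<Delta>2 i r p" and os: "on_successful_path (I \<times> I) (F \<times> F) \<Delta>2 p"
        using rel by (auto simp: relevant_pair_def)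
      obtain m where m: "\<rho> p = Some m" "EQ r = EQ m" "EQ r \<noteq> {}"
        using inv[OF sstar_to'[OF i(2)] i(1) os] by blast
      obtain m1 m2 where mm: "m = (m1, m2)" by (cases m)
      show "\<exists>x. valuation_nu \<rho> \<eta> p = Some x \<and> is_mge x r"
      proof (cases "m1 = m2")
        case True
        have "valuation_nu \<rho> \<eta> p = Some (1, 1)" using m(1) mm True by (simp add: valuation_nu_def)
        moreover have "EQ (m1, m1) = range (\<lambda>z. (fst (1::'m, 1::'m) * z, snd (1::'m, 1::'m) * z))"
        proof
          show "EQ (m1, m1) \<subseteq> range (\<lambda>z. (fst (1::'m, 1::'m) * z, snd (1::'m, 1::'m) * z))"
          proof
            fix y assume "y \<in> EQ (m1, m1)"
            hence "m1 * fst y = m1 * snd y" by (simp add: EQ_def equalizer_def)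
            hence "fst y = snd y" using left_cancel[OF assms(1)] by blast
            thus "y \<in> range (\<lambda>z. (fst (1::'m, 1::'m) * z, snd (1::'m, 1::'m) * z))"
              by (simp add: image_iff) (metis prod.collapse)
          qed
          show "range (\<lambda>z. (fst (1::'m, 1::'m) * z, snd (1::'m, 1::'m) * z)) \<subseteq> EQ (m1, m1)"
            by (auto simp: EQ_def equalizer_def)
        qed
        hence "is_mge (1, 1) r" using m(2) mm True by (simp only: is_mge_EQ)
        ultimately show ?thesis by blast
      next
        case False
        have "equalizable m" using m(2,3) by (auto simp: EQ_def equalizable_def)
        then obtain x where x: "\<eta> m = Some x" using etaD by blast
        have "valuation_nu \<rho> \<eta> p = Some x" using m(1) mm False x by (simp add: valuation_nu_def)
        moreover have "is_mge x r" using etaS[OF x] m(2) by (simp add: is_mge_EQ)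
        ultimately show ?thesis by blast
      qed
    qed
  qed
qed

end
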